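(* Let ${\mathsf q}$ be a prime power, $t\in\{0,\ldots,{\mathsf K}-1\}$, $\mathbb{D}\in\mathbb{F}_{\mathsf q}^{{\mathsf K}\times{\mathsf N}}$, $\mathcal L$ a leader set, and $\mathcal A\subseteq[{\mathsf K}]\setminus\mathcal L$ with $|\mathcal A|=t+1$. Then, for every choice of the subfiles $F_{i,\mathcal W}$, $$W_{\mathcal A}=\sum_{\substack{\mathcal S\subseteq\mathcal A\cup\mathcal L:\ |\mathcal S|=t+1,\ \mathcal S\neq\mathcal A}}\beta_{\mathcal A,\mathcal S}\,W_{\mathcal S},\qquad \beta_{\mathcal A,\mathcal S}=(-1)^{1+\mathrm{Tot}(\overline{\mathrm{Ind}}_{\mathcal S})}\det\!\big(\mathbb{D}'_{\mathcal A\setminus\mathcal S,\ \mathrm{Ind}_{\mathcal S}}\big).$$ In particular every message $W_{\mathcal S}$ on the right-hand side satisfies $\mathcal S\cap\mathcal L\neq\emptyset$.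
   Context: Notation: sets of integers are listed increasingly, $\mathcal S(1)<\mathcal S(2)<\cdots$. $\mathbb{D}$ has rows $\mathbf y_k=(y_{k,1},\ldots,y_{k,{\mathsf N}})$. A leader set is $\mathcal L\subseteq[{\mathsf K}]$ with $|\mathcal L|=\mathrm{rank}_{\mathsf q}(\mathbb{D}_{\mathcal L})=\mathrm{rank}_{\mathsf q}(\mathbb{D})$, where $\mathbb{D}_{\mathcal L}$ is the submatrix of rows in $\mathcal L$. For each $k\in[{\mathsf K}]$ let $\mathbf x_k=(x_{k,1},\ldots,x_{k,|\mathcal L|})\in\mathbb{F}_{\mathsf q}^{|\mathcal L|}$ be the unique vector with $\mathbf y_k=\sum_{j}x_{k,j}\mathbf y_{\mathcal L(j)}$, and let $\mathbb{D}'$ be the ${\mathsf K}\times|\mathcal L|$ matrix with rows $\mathbf x_k$. Subfiles $F_{i,\mathcal W}\in\mathbb{F}_{\mathsf q}^{\ell}$ for $i\in[{\mathsf N}]$, $\mathcal W\subseteq[{\mathsf K}]$, $|\mathcal W|=t$. Blocks $B_{k,\mathcal W}=\sum_n y_{k,n}F_{n,\mathcal W}$. For $\mathcal S\subseteq[{\mathsf K}]$, $|\mathcal S|=t+1$, let $\mathcal L_{\mathcal S}=\mathcal S\cap\mathcal L$, $\mathcal N_{\mathcal S}=\mathcal S\setminus\mathcal L$, and $W_{\mathcal S}=\sum_{i\in[|\mathcal L_{\mathcal S}|]}(-1)^{i-1}B_{\mathcal L_{\mathcal S}(i),\mathcal S\setminus\{\mathcal L_{\mathcal S}(i)\}}+\sum_{j\in[|\mathcal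 N_{\mathcal S}|]}(-1)^{j-1}B_{\mathcal N_{\mathcal S}(j),\mathcal S\setminus\{\mathcal N_{\mathcal S}(j)\}}$. For $\mathcal S\subseteq\mathcal A\cup\mathcal L$: $\mathrm{Ind}_{\mathcal S}=\{i\in[|\mathcal L|]:\mathcal L(i)\in\mathcal S\}$, $\overline{\mathrm{Ind}}_{\mathcal S}=\{i\in[t+1]:\mathcal A(i)\notin\mathcal S\}$, and $\mathrm{Tot}(\mathcal X)$ is the sum of the elements of $\mathcal X$. When $|\mathcal S|=t+1$, $|\mathcal A\setminus\mathcal S|=|\mathrm{Ind}_{\mathcal S}|$, and $\mathbb{D}'_{\mathcal A\setminus\mathcal S,\mathrm{Ind}_{\mathcal S}}$ is the square submatrix of $\mathbb{D}'$ with rows indexed by $\mathcal A\setminus\mathcal S$ and columns indexed by $\mathrm{Ind}_{\mathcal S}$, both taken in increasing order. *)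

theory Defs
  imports Main "Jordan_Normal_Form.Determinant"
begin

text \<open>Users are indexed by [K] = {1..K}, files by [N] = {1..N}.
  The demand matrix D is a function nat => nat => 'a where D k n is the entry
  in row k, column n (only 1 <= k <= K, 1 <= n <= N are relevant).
  Subfiles F i W are vectors in F_q^ell, represented by their coordinate
  functions F i W p for p < ell.\<close>

definition elem :: "nat set \<Rightarrow> nat \<Rightarrow> nat" where
  "elem S i = sorted_list_of_set S ! (i - 1)"

definition lin_indep_rows :: "(nat \<Rightarrow> nat \<Rightarrow> 'a::field) \<Rightarrow> nat \<Rightarrow> nat set \<Rightarrow> bool" where
  "lin_indep_rows D N R \<longleftrightarrow>
     (\<forall>c :: nat \<Rightarrow> 'a. (\<forall>n\<in>{1..N}. (\<Sum>k\<in>R. c k * D k n) = 0) \<longrightarrow> (\<forall>k\<in>R. c k = 0))"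

definition rank_rows :: "(nat \<Rightarrow> nat \<Rightarrow> 'a::field) \<Rightarrow> nat \<Rightarrow> nat set \<Rightarrow> nat" where
  "rank_rows D N R = Max (card ` {S. S \<subseteq> R \<and> lin_indep_rows D N S})"

definition leader_set :: "(nat \<Rightarrow> nat \<Rightarrow> 'a::field) \<Rightarrow> nat \<Rightarrow> nat \<Rightarrow> nat set \<Rightarrow> bool" where
  "leader_set D K N L \<longleftrightarrow> L \<subseteq> {1..K} \<and>
     card L = rank_rows D N L \<and> rank_rows D N L = rank_rows D N {1..K}"

text \<open>D' k j = x_{k,j}: the unique coefficients with y_k = sum_j x_{k,j} y_{L(j)}
  (coefficient vector indexed by j in {1..|L|}, set to 0 outside).\<close>
definition Dprime :: "(nat \<Rightarrow> nat \<Rightarrow> 'a::field) \<Rightarrow> nat \<Rightarrow> nat set \<Rightarrow> nat \<Rightarrow> nat \<Rightarrow> 'a" where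
  "Dprime D N L k = (THE x :: nat \<Rightarrow> 'a.
      (\<forall>n\<in>{1..N}. D k n = (\<Sum>j\<in>{1..card L}. x j * D (elem L j) n)) \<and>
      (\<forall>j. j \<notin> {1..card L} \<longrightarrow> x j = 0))"

definition blockB :: "(nat \<Rightarrow> nat \<Rightarrow> 'a::field) \<Rightarrow> nat \<Rightarrow> (nat \<Rightarrow> nat set \<Rightarrow> nat \<Rightarrow> 'a)
    \<Rightarrow> nat \<Rightarrow> nat set \<Rightarrow> nat \<Rightarrow> 'a" where
  "blockB D N F k W p = (\<Sum>n\<in>{1..N}. D k n * F n W p)"

definition msgW :: "(nat \<Rightarrow> nat \<Rightarrow> 'a::field) \<Rightarrow> nat \<Rightarrow> nat set \<Rightarrow> (nat \<Rightarrow> nat set \<Rightarrow> nat \<Rightarrow> 'a)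
    \<Rightarrow> nat set \<Rightarrow> nat \<Rightarrow> 'a" where
  "msgW D N L F S p =
    (let LS = S \<inter> L; NS = S - L in
      (\<Sum>i\<in>{1..card LS}. (-1) ^ (i - 1) * blockB D N F (elem LS i) (S - {elem LS i}) p)
    + (\<Sum>j\<in>{1..card NS}. (-1) ^ (j - 1) * blockB D N F (elem NS j) (S - {elem NS j}) p))"

definition Ind :: "nat set \<Rightarrow> nat set \<Rightarrow> nat set" where
  "Ind L S = {i\<in>{1..card L}. elem L i \<in> S}"

definition IndBar :: "nat \<Rightarrow> nat set \<Rightarrow> nat set \<Rightarrow> nat set" where
  "IndBar t A S = {i\<in>{1..t+1}. elem A i \<notin> S}"

definition Tot :: "nat set \<Rightarrow> nat" where
  "Tot X = (\<Sum>x\<in>X. x)"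

definition subDprime :: "(nat \<Rightarrow> nat \<Rightarrow> 'a::field) \<Rightarrow> nat \<Rightarrow> nat set \<Rightarrow> nat set \<Rightarrow> nat set \<Rightarrow> 'a mat" where
  "subDprime D N L A S = mat (card (A - S)) (card (Ind L S))
     (\<lambda>(i, j). Dprime D N L (elem (A - S) (i + 1)) (elem (Ind L S) (j + 1)))"

definition beta :: "(nat \<Rightarrow> nat \<Rightarrow> 'a::field) \<Rightarrow> nat \<Rightarrow> nat set \<Rightarrow> nat \<Rightarrow> nat set \<Rightarrow> nat set \<Rightarrow> 'a" where
  "beta D N L t A S = (-1) ^ (1 + Tot (IndBar t A S)) * det (subDprime D N L A S)"

end

theory Submission
  imports Defs
begin

definition pos :: "nat set \<Rightarrow> nat \<Rightarrow> nat" where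
  "pos X y = card {w\<in>X. w < y}"

lemma sorted_less_take:
  fixes xs :: "nat list"
  assumes "sorted xs" "distinct xs" "i < length xs"
  shows "{w\<in>set xs. w < xs!i} = set (take i xs)"
proof
  show "{w \<in> set xs. w < xs ! i} \<subseteq> set (take i xs)"
  proof
    fix w assume "w \<in> {w \<in> set xs. w < xs ! i}"
    then obtain m where m: "m < length xs" "w = xs!m" "xs!m < xs!i" by (auto simp: in_set_conv_nth)
    have "m < i"
    proof (rule ccontr)
      assume "\<not> m < i" then have "xs!i \<le> xs!m" using assms m by (simp add: sorted_nth_mono)
      with m show False by simp
    qed
    then show "w \<in> set (take i xs)" using m by (auto simp: in_set_conv_nth)
  qed
  show "set (take i xs) \<subseteq> {w \<in> set xs. w < xs ! i}"
  proof
    fix w assume "w \<in> set (take i xs)"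
    then obtain m where m: "m < i" "w = xs!m" using assms by (auto simp: in_set_conv_nth)
    have "xs!m \<le> xs!i" using assms m by (simp add: sorted_nth_mono)
    moreover have "xs!m \<noteq> xs!i" using assms m by (simp add: nth_eq_iff_index_eq)
    ultimately show "w \<in> {w \<in> set xs. w < xs ! i}" using m assms by auto
  qed
qed

lemma elem_props:
  assumes "finite X" "i < card X"
  shows "elem X (Suc i) \<in> X" "pos X (elem X (Suc i)) = i"
proof -
  let ?xs = "sorted_list_of_set X"
  have l: "length ?xs = card X" by simp
  have e: "elem X (Suc i) = ?xs ! i" by (simp add: elem_def)
  show "elem X (Suc i) \<in> X" using assms e l by (metis nth_mem set_sorted_list_of_set)
  have "{w\<in>X. w < ?xs!i} = set (take i ?xs)"
    using sorted_less_take[of ?xs i] assms by simp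
  then show "pos X (elem X (Suc i)) = i" using assms e
    by (simp add: pos_def distinct_card)
qed

lemma pos_mono_less:
  assumes "finite X" "y \<in> X" "y < z"
  shows "pos X y < pos X z"
proof -
  have "insert y {w\<in>X. w < y} \<subseteq> {w\<in>X. w < z}" using assms by auto
  moreover have "y \<notin> {w\<in>X. w < y}" by simp
  ultimately have "card (insert y {w\<in>X. w < y}) \<le> card {w\<in>X. w < z}"
    using assms by (intro card_mono) auto
  then show ?thesis using assms by (simp add: pos_def)
qed

lemma pos_lt_card:
  assumes "finite X" "y \<in> X"
  shows "pos X y < card X"
proof -
  have "{w\<in>X. w < y} \<subset> X" using assms by auto
  then show ?thesis using assms by (simp add: pos_def psubset_card_mono)
qed

lemma pos_inj:
  assumes "finite X" "y \<in> X" "z \<in> X" "pos X y = pos X z"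
  shows "y = z"
  using pos_mono_less[OF assms(1,2)] pos_mono_less[OF assms(1,3)] assms(4)
  by (metis less_irrefl linorder_neqE_nat)

lemma elem_pos:
  assumes "finite X" "y \<in> X"
  shows "elem X (Suc (pos X y)) = y"
  using elem_props[OF assms(1) pos_lt_card[OF assms]] pos_inj[OF assms(1)] assms by blast

lemma elem_eqI:
  assumes "finite X" "y \<in> X" "pos X y = i"
  shows "elem X (Suc i) = y"
  using elem_pos assms by blast

lemma bij_elem:
  assumes "finite X"
  shows "bij_betw (elem X) {1..card X} X"
proof (rule bij_betw_byWitness[where f' = "\<lambda>y. Suc (pos X y)"])
  show "\<forall>a\<in>{1..card X}. Suc (pos X (elem X a)) = a"
    using elem_props[OF assms] by (auto simp: Suc_le_eq) (metis Suc_pred' elem_props(2)[OF assms] le_simps(3) diff_less One_nat_def zero_less_one)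
  show "\<forall>a'\<in>X. elem X (Suc (pos X a')) = a'" using elem_pos[OF assms] by blast
  show "elem X ` {1..card X} \<subseteq> X" using elem_props(1)[OF assms] 
    by auto (metis Suc_pred' Suc_le_eq le_simps(3) One_nat_def)
  show "(\<lambda>y. Suc (pos X y)) ` X \<subseteq> {1..card X}" using pos_lt_card[OF assms] by (auto simp: Suc_le_eq)
qed

lemma pos_elem:
  assumes "finite X" "i \<in> {1..card X}"
  shows "pos X (elem X i) = i - 1" "elem X i \<in> X"
  using elem_props[OF assms(1), of "i-1"] assms(2) by auto

lemma sum_elem:
  fixes f :: "nat \<Rightarrow> 'a::comm_ring_1"
  assumes "finite X"
  shows "(\<Sum>i\<in>{1..card X}. (-1) ^ (i - 1) * f (elem X i)) = (\<Sum>k\<in>X. (-1) ^ (pos X k) * f k)"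
proof -
  have "(\<Sum>k\<in>X. (-1) ^ (pos X k) * f k) = (\<Sum>i\<in>{1..card X}. (-1) ^ (pos X (elem X i)) * f (elem X i))"
    using sum.reindex_bij_betw[OF bij_elem[OF assms], of "\<lambda>k. (-1) ^ (pos X k) * f k"] by simp
  also have "\<dots> = (\<Sum>i\<in>{1..card X}. (-1) ^ (i - 1) * f (elem X i))"
    by (rule sum.cong) (auto simp: pos_elem[OF assms])
  finally show ?thesis by simp
qed

definition sg :: "nat set \<Rightarrow> nat set \<Rightarrow> nat \<Rightarrow> 'a::comm_ring_1" where
  "sg L S k = (if k \<in> L then (-1) ^ (pos (S \<inter> L) k) else (-1) ^ (pos (S - L) k))"

lemma msgW_alt:
  assumes "finite S"
  shows "msgW D N L F S p = (\<Sum>k\<in>S. sg L S k * blockB D N F k (S - {k}) p)"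
proof -
  have e1: "(\<Sum>i\<in>{1..card (S \<inter> L)}. (-1) ^ (i - 1) * blockB D N F (elem (S \<inter> L) i) (S - {elem (S \<inter> L) i}) p)
     = (\<Sum>k\<in>S \<inter> L. (-1) ^ (pos (S \<inter> L) k) * blockB D N F k (S - {k}) p)"
    using sum_elem[of "S \<inter> L" "\<lambda>k. blockB D N F k (S - {k}) p"] assms by blast
  have e2: "(\<Sum>i\<in>{1..card (S - L)}. (-1) ^ (i - 1) * blockB D N F (elem (S - L) i) (S - {elem (S - L) i}) p)
     = (\<Sum>k\<in>S - L. (-1) ^ (pos (S - L) k) * blockB D N F k (S - {k}) p)"
    using sum_elem[of "S - L" "\<lambda>k. blockB D N F k (S - {k}) p"] assms by blast
  have e3: "(\<Sum>k\<in>S \<inter> L. (-1) ^ (pos (S \<inter> L) k) * blockB D N F k (S - {k}) p)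
      = (\<Sum>k\<in>S \<inter> L. sg L S k * blockB D N F k (S - {k}) p)"
    by (rule sum.cong) (simp_all add: sg_def)
  have e4: "(\<Sum>k\<in>S - L. (-1) ^ (pos (S - L) k) * blockB D N F k (S - {k}) p)
      = (\<Sum>k\<in>S - L. sg L S k * blockB D N F k (S - {k}) p)"
    by (rule sum.cong) (simp_all add: sg_def)
  have "msgW D N L F S p = (\<Sum>k\<in>S \<inter> L. sg L S k * blockB D N F k (S - {k}) p)
     + (\<Sum>k\<in>S - L. sg L S k * blockB D N F k (S - {k}) p)"
    unfolding msgW_def Let_def e1 e2 e3 e4 ..
  also have "\<dots> = (\<Sum>k\<in>S. sg L S k * blockB D N F k (S - {k}) p)"
    by (rule sum.Int_Diff[OF assms, symmetric])
  finally show ?thesis .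
qed

lemma fin_indep:
  assumes "finite R"
  shows "finite {S. S \<subseteq> R \<and> lin_indep_rows D N S}"
proof (rule finite_subset[of _ "Pow R"])
  show "{S. S \<subseteq> R \<and> lin_indep_rows D N S} \<subseteq> Pow R" by (intro subsetI) simp
  show "finite (Pow R)" using assms by simp
qed

lemma rank_ge:
  assumes "finite R" "S \<subseteq> R" "lin_indep_rows D N S"
  shows "card S \<le> rank_rows D N R"
proof -
  have "S \<in> {S. S \<subseteq> R \<and> lin_indep_rows D N S}" using assms(2,3) by simp
  then have "card S \<in> card ` {S. S \<subseteq> R \<and> lin_indep_rows D N S}" by (rule imageI)
  then show ?thesis unfolding rank_rows_def by (rule Max_ge[OF finite_imageI[OF fin_indep[OF assms(1)]]])
qed

lemma rank_attained:
  assumes "finite R"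
  shows "\<exists>S\<subseteq>R. lin_indep_rows D N S \<and> card S = rank_rows D N R"
proof -
  have "lin_indep_rows D N {}" by (simp add: lin_indep_rows_def)
  then have "{} \<in> {S. S \<subseteq> R \<and> lin_indep_rows D N S}" by simp
  then have ne: "card ` {S. S \<subseteq> R \<and> lin_indep_rows D N S} \<noteq> {}" by (simp only: image_is_empty ex_in_conv[symmetric]) (rule exI)
  have fin: "finite (card ` {S. S \<subseteq> R \<and> lin_indep_rows D N S})"
    using fin_indep[OF assms] by (rule finite_imageI)
  have "rank_rows D N R \<in> card ` {S. S \<subseteq> R \<and> lin_indep_rows D N S}"
    unfolding rank_rows_def by (rule Max_in[OF fin ne])
  then obtain S where "S \<in> {S. S \<subseteq> R \<and> lin_indep_rows D N S}" "rank_rows D N R = card S" by (rule imageE)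
  then show ?thesis by auto
qed

definition isrep :: "(nat \<Rightarrow> nat \<Rightarrow> 'a::field) \<Rightarrow> nat \<Rightarrow> nat set \<Rightarrow> nat \<Rightarrow> (nat \<Rightarrow> 'a) \<Rightarrow> bool" where
  "isrep D N L k x \<longleftrightarrow> (\<forall>n\<in>{1..N}. D k n = (\<Sum>j\<in>{1..card L}. x j * D (elem L j) n)) \<and>
      (\<forall>j. j \<notin> {1..card L} \<longrightarrow> x j = 0)"

lemma sum_over_L:
  assumes "finite L"
  shows "(\<Sum>j\<in>{1..card L}. g (elem L j)) = (\<Sum>l\<in>L. g l)"
  using sum.reindex_bij_betw[OF bij_elem[OF assms], of g] by simp

lemma rep_unique:
  assumes "finite L" "lin_indep_rows D N L" "isrep D N L k x" "isrep D N L k y"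
  shows "x = y"
proof
  fix j
  define c where "c l = x (Suc (pos L l)) - y (Suc (pos L l))" for l
  have hc: "\<forall>n\<in>{1..N}. (\<Sum>l\<in>L. c l * D l n) = 0"
  proof
    fix n assume n: "n \<in> {1..N}"
    have "(\<Sum>l\<in>L. c l * D l n) = (\<Sum>j\<in>{1..card L}. c (elem L j) * D (elem L j) n)"
      using sum_over_L[OF assms(1), of "\<lambda>l. c l * D l n"] by simp
    also have "\<dots> = (\<Sum>j\<in>{1..card L}. (x j - y j) * D (elem L j) n)"
    proof (rule sum.cong)
      fix j assume j: "j \<in> {1..card L}"
      have "Suc (pos L (elem L j)) = j" using pos_elem[OF assms(1) j] j by simp
      then show "c (elem L j) * D (elem L j) n = (x j - y j) * D (elem L j) n" by (simp add: c_def)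
    qed simp
    also have "\<dots> = (\<Sum>j\<in>{1..card L}. x j * D (elem L j) n) - (\<Sum>j\<in>{1..card L}. y j * D (elem L j) n)"
      by (simp add: algebra_simps sum_subtractf)
    also have "\<dots> = D k n - D k n"
    proof -
      have hx: "D k n = (\<Sum>j\<in>{1..card L}. x j * D (elem L j) n)" using assms(3) n unfolding isrep_def by blast
      have hy: "D k n = (\<Sum>j\<in>{1..card L}. y j * D (elem L j) n)" using assms(4) n unfolding isrep_def by blast
      show ?thesis by (simp only: hx[symmetric] hy[symmetric])
    qed
    also have "\<dots> = 0" by simp
    finally show "(\<Sum>l\<in>L. c l * D l n) = 0" .
  qed
  have c0: "\<forall>l\<in>L. c l = 0"
  proof -
    have "(\<forall>n\<in>{1..N}. (\<Sum>l\<in>L. c l * D l n) = 0) \<longrightarrow> (\<forall>l\<in>L. c l = 0)"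
      using assms(2) unfolding lin_indep_rows_def by (rule spec)
    then show ?thesis using hc by (rule mp)
  qed
  show "x j = y j"
  proof (cases "j \<in> {1..card L}")
    case True
    note pe = pos_elem[OF assms(1) True]
    have sj: "Suc (j - 1) = j" using True by simp
    have "c (elem L j) = 0" using c0 pe(2) by blast
    then have "x (Suc (j - 1)) - y (Suc (j - 1)) = 0" by (simp only: c_def pe(1))
    then show ?thesis by (simp only: sj) simp
  next
    case False
    have "x j = 0" using assms(3) False unfolding isrep_def by blast
    moreover have "y j = 0" using assms(4) False unfolding isrep_def by blast
    ultimately show ?thesis by simp
  qed
qed

lemma leader_facts:
  assumes "leader_set D K N L"
  shows "finite L" "lin_indep_rows D N L" "L \<subseteq> {1..K}" "card L = rank_rows D N {1..K}"
proof -
  show L: "L \<subseteq> {1..K}" using assms unfolding leader_set_def by blast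
  show f: "finite L" using L by (rule finite_subset) simp
  show "card L = rank_rows D N {1..K}" using assms unfolding leader_set_def by simp
  obtain S where S: "S \<subseteq> L" "lin_indep_rows D N S" "card S = rank_rows D N L"
    using rank_attained[OF f] by blast
  have "card S = card L" using S(3) assms unfolding leader_set_def by simp
  then have "S = L" using card_subset_eq[OF f S(1)] by simp
  then show "lin_indep_rows D N L" using S(2) by simp
qed

lemma rep_leader:
  assumes "finite L" "k \<in> L"
  shows "isrep D N L k (\<lambda>j. if j = Suc (pos L k) then 1 else 0)"
  unfolding isrep_def
proof (intro conjI ballI allI impI)
  have i: "Suc (pos L k) \<in> {1..card L}" using pos_lt_card[OF assms] by simp
  have ek: "elem L (Suc (pos L k)) = k" by (rule elem_pos[OF assms])
  fix n
  have "(\<Sum>j\<in>{1..card L}. (if j = Suc (pos L k) then 1 else 0) * D (elem L j) n)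
      = (\<Sum>j\<in>{1..card L}. if j = Suc (pos L k) then D (elem L j) n else 0)"
    by (rule sum.cong) simp_all
  also have "\<dots> = D k n" using i ek by (simp add: sum.delta)
  finally show "D k n = (\<Sum>j\<in>{1..card L}. (if j = Suc (pos L k) then 1 else 0) * D (elem L j) n)" by simp
next
  fix j assume "j \<notin> {1..card L}"
  moreover have "Suc (pos L k) \<in> {1..card L}" using pos_lt_card[OF assms] by simp
  ultimately show "(if j = Suc (pos L k) then 1 else 0) = (0::'a)" by auto
qed

lemma indep_insert:
  assumes f: "finite L" and ind: "lin_indep_rows D N L" and nrep: "\<not> (\<exists>x. isrep D N L k x)"
    and kL: "k \<notin> L"
  shows "lin_indep_rows D N (insert k L)"
  unfolding lin_indep_rows_def
proof (intro allI impI)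
  fix c :: "nat \<Rightarrow> 'a"
  assume H: "\<forall>n\<in>{1..N}. (\<Sum>l\<in>insert k L. c l * D l n) = 0"
  have H2: "c k * D k n + (\<Sum>l\<in>L. c l * D l n) = 0" if n: "n \<in> {1..N}" for n
  proof -
    have "(\<Sum>l\<in>insert k L. c l * D l n) = 0" using H n by blast
    then show ?thesis using f kL by (simp add: sum.insert)
  qed
  have ck: "c k = 0"
  proof (rule ccontr)
    assume ck: "c k \<noteq> 0"
    define x where "x j = (if j \<in> {1..card L} then - c (elem L j) / c k else 0)" for j
    have "isrep D N L k x" unfolding isrep_def
    proof (intro conjI ballI allI impI)
      fix n assume n: "n \<in> {1..N}"
      have "(\<Sum>j\<in>{1..card L}. x j * D (elem L j) n) = (\<Sum>j\<in>{1..card L}. (- c (elem L j) / c k) * D (elem L j) n)"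
        by (rule sum.cong) (simp_all add: x_def)
      also have "\<dots> = (\<Sum>l\<in>L. (- c l / c k) * D l n)"
        by (rule sum_over_L[OF f, of "\<lambda>l. (- c l / c k) * D l n"])
      also have "\<dots> = - (\<Sum>l\<in>L. c l * D l n) / c k"
        by (simp add: sum_divide_distrib sum_negf)
      also have "\<dots> = D k n"
      proof -
        have "(\<Sum>l\<in>L. c l * D l n) = - (c k * D k n)" using H2[OF n] by (simp add: add_eq_0_iff)
        then show ?thesis using ck by simp
      qed
      finally show "D k n = (\<Sum>j\<in>{1..card L}. x j * D (elem L j) n)" by simp
    next
      fix j assume "j \<notin> {1..card L}" then show "x j = 0" unfolding x_def by (rule if_not_P)
    qed
    then show False using nrep by blast
  qed
  have HL: "\<forall>n\<in>{1..N}. (\<Sum>l\<in>L. c l * D l n) = 0" using H2 ck by simp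
  have "(\<forall>n\<in>{1..N}. (\<Sum>l\<in>L. c l * D l n) = 0) \<longrightarrow> (\<forall>l\<in>L. c l = 0)"
    using ind unfolding lin_indep_rows_def by (rule spec)
  then have "\<forall>l\<in>L. c l = 0" using HL by (rule mp)
  then show "\<forall>l\<in>insert k L. c l = 0" using ck by simp
qed

lemma rep_exists:
  assumes ls: "leader_set D K N L" and k: "k \<in> {1..K}"
  shows "\<exists>x. isrep D N L k x"
proof (cases "k \<in> L")
  case True then show ?thesis using rep_leader[OF leader_facts(1)[OF ls] True] by blast
next
  case False
  show ?thesis
  proof (rule ccontr)
    assume nrep: "\<not> (\<exists>x. isrep D N L k x)"
    note lf = leader_facts[OF ls]
    have "lin_indep_rows D N (insert k L)" by (rule indep_insert[OF lf(1) lf(2) nrep False])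
    moreover have "insert k L \<subseteq> {1..K}" using lf(3) k by simp
    ultimately have "card (insert k L) \<le> rank_rows D N {1..K}" by (intro rank_ge) simp_all
    then show False using lf(1,4) False by simp
  qed
qed

lemma Dprime_rep:
  assumes ls: "leader_set D K N L" and k: "k \<in> {1..K}"
  shows "isrep D N L k (Dprime D N L k)"
proof -
  have ex1: "\<exists>!x. isrep D N L k x"
    using rep_exists[OF ls k] rep_unique[OF leader_facts(1,2)[OF ls]] by blast
  have "Dprime D N L k = (THE x. isrep D N L k x)" unfolding Dprime_def isrep_def ..
  then show ?thesis using theI'[OF ex1] by simp
qed

lemma Dprime_leader:
  assumes ls: "leader_set D K N L" and k: "k \<in> L"
  shows "Dprime D N L k = (\<lambda>j. if j = Suc (pos L k) then 1 else 0)"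
proof (rule rep_unique[OF leader_facts(1,2)[OF ls]])
  show "isrep D N L k (Dprime D N L k)" using Dprime_rep[OF ls] k leader_facts(3)[OF ls] by blast
  show "isrep D N L k (\<lambda>j. if j = Suc (pos L k) then 1 else 0)" by (rule rep_leader[OF leader_facts(1)[OF ls] k])
qed

lemma block_expand:
  assumes ls: "leader_set D K N L" and k: "k \<in> {1..K}"
  shows "blockB D N F k W p = (\<Sum>j\<in>{1..card L}. Dprime D N L k j * blockB D N F (elem L j) W p)"
proof -
  have r: "\<And>n. n \<in> {1..N} \<Longrightarrow> D k n = (\<Sum>j\<in>{1..card L}. Dprime D N L k j * D (elem L j) n)"
    using Dprime_rep[OF ls k] unfolding isrep_def by blast
  have "blockB D N F k W p = (\<Sum>n\<in>{1..N}. (\<Sum>j\<in>{1..card L}. Dprime D N L k j * D (elem L j) n) * F n W p)"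
    unfolding blockB_def by (rule sum.cong) (simp_all add: r)
  also have "\<dots> = (\<Sum>n\<in>{1..N}. \<Sum>j\<in>{1..card L}. Dprime D N L k j * (D (elem L j) n * F n W p))"
    by (simp add: sum_distrib_right mult.assoc)
  also have "\<dots> = (\<Sum>j\<in>{1..card L}. \<Sum>n\<in>{1..N}. Dprime D N L k j * (D (elem L j) n * F n W p))"
    by (rule sum.swap)
  also have "\<dots> = (\<Sum>j\<in>{1..card L}. Dprime D N L k j * blockB D N F (elem L j) W p)"
    unfolding blockB_def by (simp add: sum_distrib_left)
  finally show ?thesis .
qed

lemma pos_mono_le:
  assumes "finite X" "y \<le> z"
  shows "pos X y \<le> pos X z"
  unfolding pos_def using assms by (intro card_mono) auto

lemma elem_delete:
  assumes f: "finite X" and p: "p < card X" and i: "i < card X - 1"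
  shows "elem (X - {elem X (Suc p)}) (Suc i) = elem X (if i < p then Suc i else Suc (Suc i))"
proof -
  define z where "z = elem X (Suc p)"
  define q where "q = (if i < p then i else Suc i)"
  have q: "q < card X" unfolding q_def using i p by (cases "i < p") auto
  define y where "y = elem X (Suc q)"
  have yX: "y \<in> X" and py: "pos X y = q" using elem_props[OF f q] by (simp_all add: y_def)
  have zX: "z \<in> X" and pz: "pos X z = p" using elem_props[OF f p] by (simp_all add: z_def)
  have yz: "y \<noteq> z" using py pz by (auto simp: q_def split: if_splits)
  have "pos (X - {z}) y = i"
  proof (cases "i < p")
    case True
    have "y < z"
    proof (rule ccontr)
      assume "\<not> y < z" then have "pos X z \<le> pos X y" using pos_mono_le[OF f] by simp
      then show False using True py pz by (simp add: q_def)
    qed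
    then have "{w\<in>X - {z}. w < y} = {w\<in>X. w < y}" by auto
    then show ?thesis using py True unfolding pos_def by (simp add: q_def)
  next
    case False
    have "z < y"
    proof (rule ccontr)
      assume "\<not> z < y" then have "pos X y \<le> pos X z" using pos_mono_le[OF f] by simp
      then show False using False py pz by (simp add: q_def)
    qed
    then have e: "{w\<in>X - {z}. w < y} = {w\<in>X. w < y} - {z}" by auto
    have "z \<in> {w\<in>X. w < y}" using zX \<open>z < y\<close> by simp
    then have "card ({w\<in>X. w < y} - {z}) = card {w\<in>X. w < y} - 1" using f by (simp add: card_Diff_singleton)
    then show ?thesis using py False e unfolding pos_def by (simp add: q_def)
  qed
  then have "elem (X - {z}) (Suc i) = y" using elem_eqI[of "X - {z}" y i] f yX yz by simp
  then show ?thesis by (simp add: y_def q_def z_def)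
qed

definition subm :: "(nat \<Rightarrow> nat \<Rightarrow> 'a) \<Rightarrow> nat set \<Rightarrow> nat set \<Rightarrow> 'a mat" where
  "subm x R C = mat (card R) (card C) (\<lambda>(i, j). x (elem R (i + 1)) (elem C (j + 1)))"

definition Qm :: "(nat \<Rightarrow> nat \<Rightarrow> 'a) \<Rightarrow> nat set \<Rightarrow> nat set \<Rightarrow> nat \<Rightarrow> 'a mat" where
  "Qm x R C0 j = mat (card R) (card R) (\<lambda>(i, jj). if jj = 0 then x (elem R (Suc i)) j else x (elem R (Suc i)) (elem C0 jj))"

lemma card_del: "finite X \<Longrightarrow> i < card X \<Longrightarrow> card (X - {elem X (Suc i)}) = card X - 1"
  using elem_props(1) by (simp add: card_Diff_singleton)

lemma mat_delete_Q:
  assumes fR: "finite R" and fC: "finite C0" and cR: "card R = Suc (card C0)" and i: "i < card R"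
  shows "mat_delete (Qm x R C0 j) i 0 = subm x (R - {elem R (Suc i)}) C0"
proof (rule eq_matI)
  show "dim_row (mat_delete (Qm x R C0 j) i 0) = dim_row (subm x (R - {elem R (Suc i)}) C0)"
    using card_del[OF fR i] by (simp add: Qm_def subm_def)
  show "dim_col (mat_delete (Qm x R C0 j) i 0) = dim_col (subm x (R - {elem R (Suc i)}) C0)"
    using cR by (simp add: Qm_def subm_def)
  fix i' j' assume i': "i' < dim_row (subm x (R - {elem R (Suc i)}) C0)" and j': "j' < dim_col (subm x (R - {elem R (Suc i)}) C0)"
  have i'': "i' < card R - 1" using i' card_del[OF fR i] by (simp add: subm_def)
  have j'': "j' < card C0" using j' by (simp add: subm_def)
  have "mat_delete (Qm x R C0 j) i 0 $$ (i', j') = Qm x R C0 j $$ (if i' < i then i' else Suc i', Suc j')"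
    unfolding mat_delete_def using i'' j'' cR by (simp add: Qm_def)
  also have "\<dots> = x (elem R (Suc (if i' < i then i' else Suc i'))) (elem C0 (Suc j'))"
    using i'' j'' cR by (simp add: Qm_def)
  also have "\<dots> = x (elem (R - {elem R (Suc i)}) (Suc i')) (elem C0 (Suc j'))"
    using elem_delete[OF fR i i''] by simp
  also have "\<dots> = subm x (R - {elem R (Suc i)}) C0 $$ (i', j')"
    using i'' j'' card_del[OF fR i] by (simp add: subm_def)
  finally show "mat_delete (Qm x R C0 j) i 0 $$ (i', j') = subm x (R - {elem R (Suc i)}) C0 $$ (i', j')" .
qed

lemma laplace_Q:
  fixes x :: "nat \<Rightarrow> nat \<Rightarrow> 'a::comm_ring_1"
  assumes fR: "finite R" and fC: "finite C0" and cR: "card R = Suc (card C0)"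
  shows "det (Qm x R C0 j) = (\<Sum>i<card R. (-1) ^ i * x (elem R (Suc i)) j * det (subm x (R - {elem R (Suc i)}) C0))"
proof -
  have "det (Qm x R C0 j) = (\<Sum>i<card R. Qm x R C0 j $$ (i, 0) * cofactor (Qm x R C0 j) i 0)"
    by (rule laplace_expansion_column) (simp_all add: Qm_def cR)
  also have "\<dots> = (\<Sum>i<card R. (-1) ^ i * x (elem R (Suc i)) j * det (subm x (R - {elem R (Suc i)}) C0))"
  proof (rule sum.cong)
    fix i assume "i \<in> {..<card R}" then have i: "i < card R" by simp
    show "Qm x R C0 j $$ (i, 0) * cofactor (Qm x R C0 j) i 0 = (-1) ^ i * x (elem R (Suc i)) j * det (subm x (R - {elem R (Suc i)}) C0)"
      unfolding cofactor_def mat_delete_Q[OF fR fC cR i] using i cR by (simp add: Qm_def)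
  qed simp
  finally show ?thesis .
qed

lemma Q_zero:
  fixes x :: "nat \<Rightarrow> nat \<Rightarrow> 'a::comm_ring_1"
  assumes fR: "finite R" and fC: "finite C0" and cR: "card R = Suc (card C0)" and jC: "j \<in> C0"
  shows "det (Qm x R C0 j) = 0"
proof (rule det_identical_columns)
  define jj where "jj = Suc (pos C0 j)"
  have jj: "jj < card R" using pos_lt_card[OF fC jC] cR by (simp add: jj_def)
  have ej: "elem C0 jj = j" unfolding jj_def by (rule elem_pos[OF fC jC])
  show "Qm x R C0 j \<in> carrier_mat (card R) (card R)" by (simp add: Qm_def)
  show "0 \<noteq> jj" by (simp add: jj_def)
  show "0 < card R" using cR by simp
  show "jj < card R" by (rule jj)
  show "col (Qm x R C0 j) 0 = col (Qm x R C0 j) jj"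
    by (rule eq_vecI) (use jj cR ej in \<open>simp_all add: Qm_def jj_def\<close>)
qed

lemma pos_insert_self: "finite C \<Longrightarrow> j \<notin> C \<Longrightarrow> pos (insert j C) j = pos C j"
  unfolding pos_def by (rule arg_cong[where f=card]) auto

lemma M_expand:
  fixes x :: "nat \<Rightarrow> nat \<Rightarrow> 'a::comm_ring_1"
  assumes fR: "finite R" and fC: "finite C0" and cR: "card R = Suc (card C0)" and jC: "j \<notin> C0"
  shows "det (subm x R (insert j C0)) = (-1) ^ (pos C0 j) * det (Qm x R C0 j)"
proof -
  let ?C = "insert j C0"
  define c where "c = pos C0 j"
  have fC': "finite ?C" using fC by simp
  have cC: "card ?C = card R" using fC jC cR by simp
  have pc: "pos ?C j = c" unfolding c_def by (rule pos_insert_self[OF fC jC])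
  have c: "c < card R" using pos_lt_card[OF fC', of j] pc cC by simp
  have ec: "elem ?C (Suc c) = j" using elem_pos[OF fC', of j] pc by simp
  have CC: "?C - {elem ?C (Suc c)} = C0" using ec jC by auto
  have "det (subm x R ?C) = (\<Sum>i<card R. subm x R ?C $$ (i, c) * cofactor (subm x R ?C) i c)"
    by (rule laplace_expansion_column) (simp_all add: subm_def cC c)
  also have "\<dots> = (\<Sum>i<card R. (-1) ^ c * ((-1) ^ i * x (elem R (Suc i)) j * det (subm x (R - {elem R (Suc i)}) C0)))"
  proof (rule sum.cong)
    fix i assume "i \<in> {..<card R}" then have i: "i < card R" by simp
    have md: "mat_delete (subm x R ?C) i c = subm x (R - {elem R (Suc i)}) C0"
    proof (rule eq_matI)
      show "dim_row (mat_delete (subm x R ?C) i c) = dim_row (subm x (R - {elem R (Suc i)}) C0)"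
        using card_del[OF fR i] by (simp add: subm_def)
      show "dim_col (mat_delete (subm x R ?C) i c) = dim_col (subm x (R - {elem R (Suc i)}) C0)"
        using cC cR by (simp add: subm_def)
      fix i' j' assume i': "i' < dim_row (subm x (R - {elem R (Suc i)}) C0)" and j': "j' < dim_col (subm x (R - {elem R (Suc i)}) C0)"
      have i'': "i' < card R - 1" using i' card_del[OF fR i] by (simp add: subm_def)
      have j'': "j' < card ?C - 1" using j' cC cR by (simp add: subm_def)
      have "mat_delete (subm x R ?C) i c $$ (i', j') = subm x R ?C $$ (if i' < i then i' else Suc i', if j' < c then j' else Suc j')"
        unfolding mat_delete_def using i'' j'' cC by (simp add: subm_def)
      also have "\<dots> = x (elem R (Suc (if i' < i then i' else Suc i'))) (elem ?C (Suc (if j' < c then j' else Suc j')))"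
        using i'' j'' cC by (simp add: subm_def)
      also have "\<dots> = x (elem (R - {elem R (Suc i)}) (Suc i')) (elem (?C - {elem ?C (Suc c)}) (Suc j'))"
        using elem_delete[OF fR i i''] elem_delete[OF fC' _ j'', of c] c cC by simp
      also have "\<dots> = subm x (R - {elem R (Suc i)}) C0 $$ (i', j')"
        using i'' j'' card_del[OF fR i] cC cR CC by (simp add: subm_def)
      finally show "mat_delete (subm x R ?C) i c $$ (i', j') = subm x (R - {elem R (Suc i)}) C0 $$ (i', j')" .
    qed
    have ent: "subm x R ?C $$ (i, c) = x (elem R (Suc i)) j" using i c cC ec by (simp add: subm_def)
    show "subm x R ?C $$ (i, c) * cofactor (subm x R ?C) i c = (-1) ^ c * ((-1) ^ i * x (elem R (Suc i)) j * det (subm x (R - {elem R (Suc i)}) C0))"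
      unfolding cofactor_def md ent by (simp add: power_add)
  qed simp
  also have "\<dots> = (-1) ^ c * det (Qm x R C0 j)"
    by (simp add: laplace_Q[OF fR fC cR] sum_distrib_left)
  finally show ?thesis by (simp add: c_def)
qed

lemma inj_pos: "finite X \<Longrightarrow> inj_on (\<lambda>a. Suc (pos X a)) X"
  by (rule inj_onI) (auto dest: pos_inj)

lemma Ind_img:
  assumes f: "finite L"
  shows "Ind L S = (\<lambda>l. Suc (pos L l)) ` (S \<inter> L)"
proof (rule equalityI; rule subsetI)
  fix i assume "i \<in> Ind L S"
  then have i: "i \<in> {1..card L}" "elem L i \<in> S" by (auto simp: Ind_def)
  note pe = pos_elem[OF f i(1)]
  have "i = Suc (pos L (elem L i))" using pe i(1) by simp
  moreover have "elem L i \<in> S \<inter> L" using pe i(2) by simp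
  ultimately show "i \<in> (\<lambda>l. Suc (pos L l)) ` (S \<inter> L)" by (rule image_eqI)
next
  fix i assume "i \<in> (\<lambda>l. Suc (pos L l)) ` (S \<inter> L)"
  then obtain l where l: "l \<in> S" "l \<in> L" "i = Suc (pos L l)" by blast
  have "i \<in> {1..card L}" using pos_lt_card[OF f l(2)] l(3) by simp
  moreover have "elem L i = l" using elem_pos[OF f l(2)] l(3) by simp
  ultimately show "i \<in> Ind L S" using l(1) by (simp add: Ind_def)
qed

lemma card_Ind: "finite L \<Longrightarrow> card (Ind L S) = card (S \<inter> L)"
  using Ind_img card_image inj_on_subset[OF inj_pos] by (metis inf_le2)

lemma Tot_IndBar:
  assumes f: "finite A" and cA: "card A = t + 1"
  shows "Tot (IndBar t A S) = (\<Sum>a\<in>A - S. Suc (pos A a))"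
proof -
  have e: "IndBar t A S = (\<lambda>a. Suc (pos A a)) ` (A - S)"
  proof (rule equalityI; rule subsetI)
    fix i assume "i \<in> IndBar t A S"
    then have i: "i \<in> {1..card A}" "elem A i \<notin> S" using cA by (auto simp: IndBar_def)
    note pe = pos_elem[OF f i(1)]
    have "i = Suc (pos A (elem A i))" using pe i(1) by simp
    moreover have "elem A i \<in> A - S" using pe i(2) by simp
    ultimately show "i \<in> (\<lambda>a. Suc (pos A a)) ` (A - S)" by (rule image_eqI)
  next
    fix i assume "i \<in> (\<lambda>a. Suc (pos A a)) ` (A - S)"
    then obtain a where a: "a \<notin> S" "a \<in> A" "i = Suc (pos A a)" by blast
    have "i \<in> {1..t+1}" using pos_lt_card[OF f a(2)] a(3) cA by simp
    moreover have "elem A i = a" using elem_pos[OF f a(2)] a(3) by simp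
    ultimately show "i \<in> IndBar t A S" using a(1) by (simp add: IndBar_def)
  qed
  have inj: "inj_on (\<lambda>a. Suc (pos A a)) (A - S)" by (rule inj_on_subset[OF inj_pos[OF f]]) blast
  show ?thesis unfolding Tot_def e by (simp add: sum.reindex[OF inj])
qed

lemma subDprime_eq: "subDprime D N L A S = subm (Dprime D N L) (A - S) (Ind L S)"
  unfolding subDprime_def subm_def ..

lemma neg1_eq:
  assumes "even (m + n)"
  shows "(-1::'a::comm_ring_1) ^ m = (-1) ^ n"
proof (cases "even m")
  case True then have "even n" using assms by simp
  then show ?thesis using True by simp
next
  case False then have "odd n" using assms by simp
  then show ?thesis using False by simp
qed

lemma bij0: "finite X \<Longrightarrow> bij_betw (\<lambda>i. elem X (Suc i)) {..<card X} X"
  by (rule bij_betw_byWitness[where f' = "pos X"])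
     (auto simp: elem_props elem_pos pos_lt_card)

lemma core:
  fixes D :: "nat \<Rightarrow> nat \<Rightarrow> 'a::field"
  assumes ls: "leader_set D K N L" and AL: "A \<subseteq> {1..K} - L" and cA: "card A = t + 1"
    and WV: "W \<subseteq> A \<union> L" and cW: "card W = t" and j: "j \<in> {1..card L}"
  shows "(\<Sum>k\<in>(A \<union> L) - W. beta D N L t A (insert k W) * sg L (insert k W) k * Dprime D N L k j) = 0"
proof -
  let ?x = "Dprime D N L"
  note lf = leader_facts[OF ls]
  have fL: "finite L" by (rule lf(1))
  have fA: "finite A" using AL by (rule finite_subset) simp
  have fW: "finite W" using WV fA fL by (meson finite_Un finite_subset)
  define R where "R = A - W"
  define C0 where "C0 = Ind L W"
  define TR where "TR = (\<Sum>a\<in>R. Suc (pos A a))"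
  define f where "f k = beta D N L t A (insert k W) * sg L (insert k W) k * ?x k j" for k
  have disj: "A \<inter> L = {}" using AL by blast
  have fR: "finite R" using fA by (simp add: R_def)
  have fC0: "finite C0" using fL by (simp add: C0_def Ind_img)
  have cWs: "card W = card (W \<inter> A) + card (W \<inter> L)"
  proof -
    have "W = (W \<inter> A) \<union> (W \<inter> L)" using WV by blast
    moreover have "(W \<inter> A) \<inter> (W \<inter> L) = {}" using disj by blast
    ultimately show ?thesis using fW card_Un_disjoint[of "W \<inter> A" "W \<inter> L"] by (metis finite_Int)
  qed
  have cR0: "card R = card A - card (W \<inter> A)"
  proof -
    have "R = A - (W \<inter> A)" by (auto simp: R_def)
    then show ?thesis using fA by (simp add: card_Diff_subset)
  qed
  have cRA: "card (W \<inter> A) \<le> card A" using fA by (simp add: card_mono)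
  have cC0: "card C0 = card (W \<inter> L)" unfolding C0_def using card_Ind[OF fL] by (simp add: Int_commute)
  have cR: "card R = Suc (card C0)" using cR0 cC0 cWs cW cA cRA by simp
  have split: "(A \<union> L) - W = R \<union> (L - W)" by (auto simp: R_def)
  have disj2: "R \<inter> (L - W) = {}" using disj by (auto simp: R_def)
  have sum_split: "(\<Sum>k\<in>(A \<union> L) - W. f k) = (\<Sum>k\<in>R. f k) + (\<Sum>k\<in>L - W. f k)"
    unfolding split by (rule sum.union_disjoint) (use fR fL disj2 in auto)
  have P1term: "f k = (-1) ^ TR * ((-1) ^ (pos R k) * ?x k j * det (subm ?x (R - {k}) C0))"
    if kR: "k \<in> R" for k
  proof -
    have kA: "k \<in> A" and kW: "k \<notin> W" using kR by (auto simp: R_def)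
    have kL: "k \<notin> L" using kA disj by blast
    have e1: "A - insert k W = R - {k}" by (auto simp: R_def)
    have e2: "Ind L (insert k W) = C0"
      unfolding C0_def Ind_img[OF fL] using kL by (simp add: Int_insert_left)
    define T' where "T' = (\<Sum>a\<in>R - {k}. Suc (pos A a))"
    have TRe: "TR = Suc (pos A k) + T'" unfolding TR_def T'_def using fR kR by (simp add: sum.remove)
    have beta_e: "beta D N L t A (insert k W) = (-1) ^ (1 + T') * det (subm ?x (R - {k}) C0)"
      unfolding beta_def Tot_IndBar[OF fA cA] subDprime_eq e1 e2 T'_def ..
    define m where "m = pos (W \<inter> A) k"
    have sg_e: "sg L (insert k W) k = (-1) ^ m"
    proof -
      have "insert k W - L = insert k (W \<inter> A)" using WV kA kL disj by blast
      moreover have "pos (insert k (W \<inter> A)) k = m" unfolding m_def using fW kW by (simp add: pos_insert_self)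
      ultimately show ?thesis using kL by (simp add: sg_def)
    qed
    have posA: "pos A k = m + pos R k"
    proof -
      have "{w\<in>A. w < k} = {w\<in>W \<inter> A. w < k} \<union> {w\<in>R. w < k}" by (auto simp: R_def)
      moreover have "{w\<in>W \<inter> A. w < k} \<inter> {w\<in>R. w < k} = {}" by (auto simp: R_def)
      ultimately show ?thesis unfolding pos_def m_def using fA fR fW
        by (simp add: card_Un_disjoint)
    qed
    have sgn: "(-1::'a) ^ (1 + T') * (-1) ^ m = (-1) ^ TR * (-1) ^ (pos R k)"
    proof -
      have "(-1::'a) ^ (1 + T' + m) = (-1) ^ (TR + pos R k)"
      proof (rule neg1_eq)
        have eq2: "1 + T' + m + (TR + pos R k) = 2 * (1 + T' + m + pos R k)" unfolding TRe posA by simp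
        show "even (1 + T' + m + (TR + pos R k))" unfolding eq2 by simp
      qed
      then show ?thesis by (simp add: power_add)
    qed
    have "f k = ((-1) ^ (1 + T') * (-1) ^ m) * (?x k j * det (subm ?x (R - {k}) C0))"
      unfolding f_def beta_e sg_e by (simp add: ac_simps)
    also have "\<dots> = (-1) ^ TR * ((-1) ^ (pos R k) * ?x k j * det (subm ?x (R - {k}) C0))"
      unfolding sgn by (simp add: ac_simps)
    finally show ?thesis .
  qed
  have P1: "(\<Sum>k\<in>R. f k) = (-1) ^ TR * det (Qm ?x R C0 j)"
  proof -
    have "(\<Sum>k\<in>R. f k) = (-1) ^ TR * (\<Sum>k\<in>R. (-1) ^ (pos R k) * ?x k j * det (subm ?x (R - {k}) C0))"
      by (simp add: P1term sum_distrib_left)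
    also have "(\<Sum>k\<in>R. (-1) ^ (pos R k) * ?x k j * det (subm ?x (R - {k}) C0))
       = (\<Sum>i<card R. (-1) ^ (pos R (elem R (Suc i))) * ?x (elem R (Suc i)) j * det (subm ?x (R - {elem R (Suc i)}) C0))"
      using sum.reindex_bij_betw[OF bij0[OF fR], of "\<lambda>k. (-1) ^ (pos R k) * ?x k j * det (subm ?x (R - {k}) C0)"]
      by simp
    also have "\<dots> = (\<Sum>i<card R. (-1) ^ i * ?x (elem R (Suc i)) j * det (subm ?x (R - {elem R (Suc i)}) C0))"
      by (rule sum.cong) (simp_all add: elem_props(2)[OF fR])
    also have "\<dots> = det (Qm ?x R C0 j)" by (rule laplace_Q[OF fR fC0 cR, symmetric])
    finally show ?thesis .
  qed
  define k0 where "k0 = elem L j"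
  have pj: "pos L k0 = j - 1" "k0 \<in> L" using pos_elem[OF fL j] by (simp_all add: k0_def)
  have sk0: "Suc (pos L k0) = j" using pj j by simp
  have xk: "?x k j = (if k = k0 then 1 else 0)" if kL: "k \<in> L" for k
  proof -
    have "?x k j = (if j = Suc (pos L k) then 1 else 0)" using Dprime_leader[OF ls kL] by simp
    moreover have "(j = Suc (pos L k)) = (k = k0)"
    proof
      assume "j = Suc (pos L k)" then have "pos L k = pos L k0" using sk0 by simp
      then show "k = k0" using pos_inj[OF fL kL pj(2)] by simp
    next
      assume "k = k0" then show "j = Suc (pos L k)" using sk0 by simp
    qed
    ultimately show ?thesis by simp
  qed
  have P2a: "(\<Sum>k\<in>L - W. f k) = (if k0 \<in> L - W then beta D N L t A (insert k0 W) * sg L (insert k0 W) k0 else 0)"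
  proof -
    have "(\<Sum>k\<in>L - W. f k) = (\<Sum>k\<in>L - W. if k = k0 then beta D N L t A (insert k W) * sg L (insert k W) k else 0)"
      by (rule sum.cong) (simp_all add: f_def xk)
    also have "\<dots> = (if k0 \<in> L - W then beta D N L t A (insert k0 W) * sg L (insert k0 W) k0 else 0)"
      using fL by (simp add: sum.delta')
    finally show ?thesis .
  qed
  have jC0: "(j \<in> C0) = (k0 \<in> W)" using j by (simp add: C0_def Ind_def k0_def)
  show ?thesis
  proof (cases "k0 \<in> W")
    case True
    have "det (Qm ?x R C0 j) = 0" by (rule Q_zero[OF fR fC0 cR]) (use jC0 True in simp)
    then show ?thesis unfolding f_def[symmetric] sum_split P1 P2a using True by simp
  next
    case False
    have jn: "j \<notin> C0" using jC0 False by simp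
    have k0A: "k0 \<notin> A" using pj(2) disj by blast
    have e1: "A - insert k0 W = R" using k0A by (auto simp: R_def)
    have e2: "Ind L (insert k0 W) = insert j C0"
    proof -
      have "Ind L (insert k0 W) = {i \<in> {1..card L}. elem L i = k0 \<or> elem L i \<in> W}" by (simp add: Ind_def)
      also have "\<dots> = insert j C0"
      proof (rule equalityI; rule subsetI)
        fix i assume "i \<in> {i \<in> {1..card L}. elem L i = k0 \<or> elem L i \<in> W}"
        then have i: "i \<in> {1..card L}" "elem L i = k0 \<or> elem L i \<in> W" by auto
        show "i \<in> insert j C0"
        proof (cases "elem L i = k0")
          case True
          then have "Suc (pos L (elem L i)) = j" using sk0 by simp
          then have "i = j" using pos_elem(1)[OF fL i(1)] i(1) by simp
          then show ?thesis by simp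
        next
          case False then show ?thesis using i by (simp add: C0_def Ind_def)
        qed
      next
        fix i assume "i \<in> insert j C0"
        then show "i \<in> {i \<in> {1..card L}. elem L i = k0 \<or> elem L i \<in> W}"
          using j by (auto simp: C0_def Ind_def k0_def)
      qed
      finally show ?thesis .
    qed
    have beta_e: "beta D N L t A (insert k0 W) = (-1) ^ (1 + TR) * det (subm ?x R (insert j C0))"
      unfolding beta_def Tot_IndBar[OF fA cA] subDprime_eq e1 e2 TR_def ..
    have pc: "pos (W \<inter> L) k0 = pos C0 j"
    proof -
      have img: "C0 = (\<lambda>l. Suc (pos L l)) ` (W \<inter> L)" unfolding C0_def by (rule Ind_img[OF fL])
      have "{y\<in>C0. y < j} = (\<lambda>l. Suc (pos L l)) ` {l\<in>W \<inter> L. l < k0}"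
      proof (rule equalityI; rule subsetI)
        fix y assume "y \<in> {y\<in>C0. y < j}"
        then obtain l where l: "l \<in> W" "l \<in> L" "y = Suc (pos L l)" "Suc (pos L l) < j" using img by auto
        have "l < k0"
        proof (rule ccontr)
          assume "\<not> l < k0" then have "pos L k0 \<le> pos L l" using pos_mono_le[OF fL] by simp
          then show False using l(4) sk0 by simp
        qed
        then show "y \<in> (\<lambda>l. Suc (pos L l)) ` {l\<in>W \<inter> L. l < k0}" using l by blast
      next
        fix y assume "y \<in> (\<lambda>l. Suc (pos L l)) ` {l\<in>W \<inter> L. l < k0}"
        then obtain l where l: "l \<in> W" "l \<in> L" "y = Suc (pos L l)" "l < k0" by auto
        have "pos L l < pos L k0" by (rule pos_mono_less[OF fL l(2) l(4)])
        then show "y \<in> {y\<in>C0. y < j}" using l img sk0 by auto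
      qed
      moreover have "inj_on (\<lambda>l. Suc (pos L l)) {l\<in>W \<inter> L. l < k0}"
        by (rule inj_on_subset[OF inj_pos[OF fL]]) blast
      ultimately show ?thesis unfolding pos_def by (simp add: card_image)
    qed
    have sg_e: "sg L (insert k0 W) k0 = (-1) ^ (pos C0 j)"
    proof -
      have "insert k0 W \<inter> L = insert k0 (W \<inter> L)" using pj(2) by blast
      moreover have "pos (insert k0 (W \<inter> L)) k0 = pos (W \<inter> L) k0" using fW False by (simp add: pos_insert_self)
      ultimately show ?thesis using pj(2) pc by (simp add: sg_def)
    qed
    have P2: "(\<Sum>k\<in>L - W. f k) = - ((-1) ^ TR * det (Qm ?x R C0 j))"
    proof -
      have "(\<Sum>k\<in>L - W. f k) = (-1) ^ (1 + TR) * ((-1) ^ (pos C0 j) * det (Qm ?x R C0 j)) * (-1) ^ (pos C0 j)"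
        unfolding P2a beta_e sg_e M_expand[OF fR fC0 cR jn] using False pj(2) by simp
      also have "\<dots> = - ((-1) ^ TR * det (Qm ?x R C0 j)) * ((-1) ^ (pos C0 j) * (-1) ^ (pos C0 j))"
        by (simp add: ac_simps)
      also have "(-1::'a) ^ (pos C0 j) * (-1) ^ (pos C0 j) = 1" by (simp add: power_add[symmetric])
      finally show ?thesis by simp
    qed
    show ?thesis unfolding f_def[symmetric] sum_split P1 P2 by simp
  qed
qed

theorem mainTheorem7:
  fixes D :: "nat \<Rightarrow> nat \<Rightarrow> 'a :: {field, finite}"
    and K N t ell :: nat
    and L A :: "nat set"
    and F :: "nat \<Rightarrow> nat set \<Rightarrow> nat \<Rightarrow> 'a"
  assumes "t < K"
    and "leader_set D K N L"
    and "A \<subseteq> {1..K} - L"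
    and "card A = t + 1"
  shows "(\<forall>p<ell. msgW D N L F A p =
            (\<Sum>S\<in>{S. S \<subseteq> A \<union> L \<and> card S = t + 1 \<and> S \<noteq> A}.
               beta D N L t A S * msgW D N L F S p))
       \<and> (\<forall>S. S \<subseteq> A \<union> L \<and> card S = t + 1 \<and> S \<noteq> A \<longrightarrow> S \<inter> L \<noteq> {})"
proof
  note ls = assms(2) and AL = assms(3) and cA = assms(4)
  note lf = leader_facts[OF ls]
  have fL: "finite L" by (rule lf(1))
  have fA: "finite A" using AL by (rule finite_subset) simp
  define V where "V = A \<union> L"
  have fV: "finite V" using fA fL by (simp add: V_def)
  have VK: "V \<subseteq> {1..K}" using AL lf(3) by (auto simp: V_def)
  show "\<forall>S. S \<subseteq> A \<union> L \<and> card S = t + 1 \<and> S \<noteq> A \<longrightarrow> S \<inter> L \<noteq> {}"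
  proof (intro allI impI)
    fix S assume S: "S \<subseteq> A \<union> L \<and> card S = t + 1 \<and> S \<noteq> A"
    show "S \<inter> L \<noteq> {}"
    proof
      assume "S \<inter> L = {}"
      then have SA: "S \<subseteq> A" using S by blast
      have "card S = card A" using S cA by simp
      then have "S = A" using card_subset_eq[OF fA SA] by simp
      then show False using S by simp
    qed
  qed
  show "\<forall>p<ell. msgW D N L F A p =
            (\<Sum>S\<in>{S. S \<subseteq> A \<union> L \<and> card S = t + 1 \<and> S \<noteq> A}.
               beta D N L t A S * msgW D N L F S p)"
  proof (intro allI impI)
    fix p assume "p < ell"
    define SS where "SS = {S. S \<subseteq> V \<and> card S = t + 1}"
    define SS' where "SS' = {S. S \<subseteq> A \<union> L \<and> card S = t + 1 \<and> S \<noteq> A}"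
    define WW where "WW = {W. W \<subseteq> V \<and> card W = t}"
    define G where "G j W = blockB D N F (elem L j) W p" for j W
    define x where "x = Dprime D N L"
    have fSS: "finite SS" unfolding SS_def by (rule finite_subset[of _ "Pow V"]) (use fV in auto)
    have fWW: "finite WW" unfolding WW_def by (rule finite_subset[of _ "Pow V"]) (use fV in auto)
    have SSe: "SS = insert A SS'" using cA by (auto simp: SS_def SS'_def V_def)
    have ASS': "A \<notin> SS'" by (simp add: SS'_def)
    have fSS': "finite SS'" using fSS SSe by simp
    have betaA: "beta D N L t A A = -1"
    proof -
      have "Tot (IndBar t A A) = 0" unfolding Tot_IndBar[OF fA cA] by simp
      moreover have "Ind L A = {}" unfolding Ind_img[OF fL] using AL by auto
      moreover have "det (subm (Dprime D N L) {} {}) = 1" by (simp add: subm_def)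
      ultimately show ?thesis unfolding beta_def subDprime_eq by simp
    qed
    define h where "h S k = (\<Sum>j\<in>{1..card L}. beta D N L t A S * sg L S k * x k j * G j (S - {k}))" for S k
    have Z: "(\<Sum>S\<in>SS. beta D N L t A S * msgW D N L F S p) = 0"
    proof -
      have "(\<Sum>S\<in>SS. beta D N L t A S * msgW D N L F S p) = (\<Sum>S\<in>SS. \<Sum>k\<in>S. h S k)"
      proof (rule sum.cong)
        fix S assume S: "S \<in> SS"
        have fS: "finite S" using S fV by (auto simp: SS_def intro: finite_subset)
        have SK: "S \<subseteq> {1..K}" using S VK by (auto simp: SS_def)
        have "beta D N L t A S * msgW D N L F S p = (\<Sum>k\<in>S. beta D N L t A S * (sg L S k * blockB D N F k (S - {k}) p))"
          unfolding msgW_alt[OF fS] by (simp add: sum_distrib_left)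
        also have "\<dots> = (\<Sum>k\<in>S. h S k)"
        proof (rule sum.cong)
          fix k assume "k \<in> S" then have k: "k \<in> {1..K}" using SK by blast
          show "beta D N L t A S * (sg L S k * blockB D N F k (S - {k}) p) = h S k"
            unfolding block_expand[OF ls k] h_def G_def x_def by (simp add: sum_distrib_left ac_simps)
        qed simp
        finally show "beta D N L t A S * msgW D N L F S p = (\<Sum>k\<in>S. h S k)" .
      qed simp
      also have "\<dots> = (\<Sum>(S, k)\<in>Sigma SS (\<lambda>S. S). h S k)"
        by (rule sum.Sigma) (use fSS fV in \<open>auto simp: SS_def intro: finite_subset\<close>)
      also have "\<dots> = (\<Sum>(W, k)\<in>Sigma WW (\<lambda>W. V - W). h (insert k W) k)"
      proof (rule sum.reindex_bij_witness[where i = "\<lambda>(W, k). (insert k W, k)" and j = "\<lambda>(S, k). (S - {k}, k)"])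
        fix a assume a: "a \<in> Sigma SS (\<lambda>S. S)"
        then obtain S k where ak: "a = (S, k)" "S \<in> SS" "k \<in> S" by blast
        have fS: "finite S" using ak fV by (auto simp: SS_def intro: finite_subset)
        show "(case (case a of (S, k) \<Rightarrow> (S - {k}, k)) of (W, k) \<Rightarrow> (insert k W, k)) = a"
          using ak by (auto simp: insert_absorb)
        show "(case a of (S, k) \<Rightarrow> (S - {k}, k)) \<in> Sigma WW (\<lambda>W. V - W)"
          using ak fS by (auto simp: SS_def WW_def)
        show "(case (case a of (S, k) \<Rightarrow> (S - {k}, k)) of (W, k) \<Rightarrow> h (insert k W) k) = (case a of (S, k) \<Rightarrow> h S k)"
          using ak by (auto simp: insert_absorb)
      next
        fix b assume b: "b \<in> Sigma WW (\<lambda>W. V - W)"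
        then obtain W k where bk: "b = (W, k)" "W \<in> WW" "k \<in> V - W" by blast
        have fW: "finite W" using bk fV by (auto simp: WW_def intro: finite_subset)
        show "(case (case b of (W, k) \<Rightarrow> (insert k W, k)) of (S, k) \<Rightarrow> (S - {k}, k)) = b"
          using bk by auto
        show "(case b of (W, k) \<Rightarrow> (insert k W, k)) \<in> Sigma SS (\<lambda>S. S)"
          using bk fW by (auto simp: SS_def WW_def)
      qed
      also have "\<dots> = (\<Sum>W\<in>WW. \<Sum>k\<in>V - W. h (insert k W) k)"
        by (rule sum.Sigma[symmetric]) (use fWW fV in auto)
      also have "\<dots> = (\<Sum>W\<in>WW. \<Sum>j\<in>{1..card L}. G j W * (\<Sum>k\<in>V - W. beta D N L t A (insert k W) * sg L (insert k W) k * x k j))"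
      proof (rule sum.cong)
        fix W assume W: "W \<in> WW"
        have "(\<Sum>k\<in>V - W. h (insert k W) k) = (\<Sum>k\<in>V - W. \<Sum>j\<in>{1..card L}. G j W * (beta D N L t A (insert k W) * sg L (insert k W) k * x k j))"
        proof (rule sum.cong)
          fix k assume "k \<in> V - W" then have "insert k W - {k} = W" by auto
          then show "h (insert k W) k = (\<Sum>j\<in>{1..card L}. G j W * (beta D N L t A (insert k W) * sg L (insert k W) k * x k j))"
            unfolding h_def by (simp add: ac_simps)
        qed simp
        also have "\<dots> = (\<Sum>j\<in>{1..card L}. \<Sum>k\<in>V - W. G j W * (beta D N L t A (insert k W) * sg L (insert k W) k * x k j))"
          by (rule sum.swap)
        also have "\<dots> = (\<Sum>j\<in>{1..card L}. G j W * (\<Sum>k\<in>V - W. beta D N L t A (insert k W) * sg L (insert k W) k * x k j))"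
          by (simp add: sum_distrib_left)
        finally show "(\<Sum>k\<in>V - W. h (insert k W) k) = (\<Sum>j\<in>{1..card L}. G j W * (\<Sum>k\<in>V - W. beta D N L t A (insert k W) * sg L (insert k W) k * x k j))" .
      qed simp
      also have "\<dots> = 0"
      proof (rule sum.neutral, rule ballI, rule sum.neutral, rule ballI)
        fix W j assume W: "W \<in> WW" and j: "j \<in> {1..card L}"
        have "(\<Sum>k\<in>V - W. beta D N L t A (insert k W) * sg L (insert k W) k * x k j) = 0"
          unfolding V_def x_def
          by (rule core[OF ls AL cA _ _ j]) (use W in \<open>simp_all add: WW_def V_def\<close>)
        then show "G j W * (\<Sum>k\<in>V - W. beta D N L t A (insert k W) * sg L (insert k W) k * x k j) = 0" by simp
      qed
      finally show ?thesis .
    qed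
    have "(\<Sum>S\<in>SS. beta D N L t A S * msgW D N L F S p) = - msgW D N L F A p + (\<Sum>S\<in>SS'. beta D N L t A S * msgW D N L F S p)"
      unfolding SSe using fSS' ASS' betaA by simp
    then show "msgW D N L F A p = (\<Sum>S\<in>{S. S \<subseteq> A \<union> L \<and> card S = t + 1 \<and> S \<noteq> A}. beta D N L t A S * msgW D N L F S p)"
      using Z unfolding SS'_def by (simp add: add_eq_0_iff)
  qed
qed

end
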